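(* Let $X$ be a real Banach space, let $K\subseteq X$ be closed and nonempty, let $x\in X\setminus K$, and let $\overline{x}\in K$ be a nearest point to $x$ in $K$ (i.e. $\|x-\overline{x}\|=d_K(x)$). If the norm of $X$ is Gateaux differentiable at $x-\overline{x}$ and $d_{K}^{-}(x;x-\overline{x})=d_{K}(x)$, then $d_{K}$ is Gateaux differentiable at $x$.
   Context: For a nonempty subset $K$ of a real Banach space $(X,\|\cdot\|)$, $d_{K}(x)=\inf\{\|x-v\|: v\in K\}$. For $x,y\in X$, $d_{K}^{-}(x;y)=\liminf_{t\to 0^{+}}\frac{d_{K}(x+ty)-d_{K}(x)}{t}$. A function $f:X\to\mathbb{R}$ is Gateaux differentiable at $x$ if there is $A\in X^{*}$ with $A(y)=\lim_{t\to 0}\frac{f(x+ty)-f(x)}{t}$ for all $y\in X$; the norm is Gateaux differentiable at a nonzero $u$ if $v\mapsto\|v\|$ is Gateaux differentiable at $u$. *)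

theory Defs
  imports "HOL-Analysis.Analysis"
begin

definition distfun :: "'a::real_normed_vector set \<Rightarrow> 'a \<Rightarrow> real" where
  "distfun K x = infdist x K"

definition lower_dini :: "('a::real_normed_vector \<Rightarrow> real) \<Rightarrow> 'a \<Rightarrow> 'a \<Rightarrow> ereal" where
  "lower_dini f x y = Liminf (at_right (0::real)) (\<lambda>t. ereal ((f (x + t *\<^sub>R y) - f x) / t))"

definition gateaux_differentiable :: "('a::real_normed_vector \<Rightarrow> real) \<Rightarrow> 'a \<Rightarrow> bool" where
  "gateaux_differentiable f x \<longleftrightarrow>
     (\<exists>A. bounded_linear A \<and>
        (\<forall>y. ((\<lambda>t. (f (x + t *\<^sub>R y) - f x) / t) \<longlongrightarrow> A y) (at (0::real))))"

end

theory Submission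
  imports Defs
begin

theorem corollary2:
  fixes K :: "'a::banach set" and x xbar :: 'a
  assumes "closed K" and "K \<noteq> {}"
    and "x \<notin> K"
    and "xbar \<in> K" and "norm (x - xbar) = distfun K x"
    and "gateaux_differentiable norm (x - xbar)"
    and "lower_dini (distfun K) x (x - xbar) = ereal (distfun K x)"
  shows "gateaux_differentiable (distfun K) x"
proof -
  define u where "u = x - xbar"
  define D where "D = distfun K"
  define d where "d = D x"
  have du: "d = norm u" using assms(5) by (simp add: u_def d_def D_def)
  obtain A where A: "bounded_linear A"
    and N: "\<And>y. ((\<lambda>t. (norm (u + t *\<^sub>R y) - norm u) / t) \<longlongrightarrow> A y) (at (0::real))"
    using assms(6) unfolding gateaux_differentiable_def u_def by blast
  have Aneg: "A (- y) = - A y" for y using A by (simp add: linear_simps)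
  have Dle: "D z \<le> norm (z - xbar)" for z
    using infdist_le[OF assms(4), of z] by (simp add: D_def distfun_def dist_norm)
  have Dlip: "D z \<ge> D w - norm (w - z)" for z w
    using infdist_triangle[of w K z] by (simp add: D_def distfun_def dist_norm)
  have dini: "eventually (\<lambda>r. d - \<delta> < (D (x + r *\<^sub>R u) - D x) / r) (at_right 0)"
    if "\<delta> > 0" for \<delta>
  proof -
    have "ereal d \<le> Liminf (at_right (0::real)) (\<lambda>t. ereal ((D (x + t *\<^sub>R u) - D x) / t))"
      using assms(7) by (simp add: lower_dini_def D_def d_def u_def)
    then have "eventually (\<lambda>t. ereal (d - \<delta>) < ereal ((D (x + t *\<^sub>R u) - D x) / t)) (at_right 0)"
      unfolding le_Liminf_iff proof -
        assume H: "\<forall>y<ereal d. \<forall>\<^sub>F xa in at_right 0. y < ereal ((D (x + xa *\<^sub>R u) - D x) / xa)"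
        have "ereal (d - \<delta>) < ereal d" using that by simp
        from H[rule_format, OF this] show ?thesis .
      qed
    then show ?thesis by simp
  qed
  define g where "g y t = (D (x + t *\<^sub>R y) - D x) / t" for y t
  define h where "h y t = (norm (u + t *\<^sub>R y) - norm u) / t" for y t
  have F1: "g y t \<le> h y t" if "t > 0" for y t
  proof -
    have "D (x + t *\<^sub>R y) \<le> norm (u + t *\<^sub>R y)"
      using Dle[of "x + t *\<^sub>R y"] by (simp add: u_def algebra_simps)
    then show ?thesis using that unfolding g_def h_def d_def[symmetric] du
      by (simp add: divide_right_mono)
  qed
  have F1': "g y t \<ge> h y t" if "t < 0" for y t
  proof -
    have "D (x + t *\<^sub>R y) \<le> norm (u + t *\<^sub>R y)"
      using Dle[of "x + t *\<^sub>R y"] by (simp add: u_def algebra_simps)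
    then show ?thesis using that unfolding g_def h_def d_def[symmetric] du
      by (simp add: divide_right_mono_neg)
  qed
  have F2: "eventually (\<lambda>t. A y - \<epsilon> < g y t) (at_right 0)" if "\<epsilon> > 0" for y \<epsilon>
  proof -
    have "((\<lambda>t. h (- y) t) \<longlongrightarrow> A (- y)) (at_right 0)"
      using N[of "-y"] unfolding h_def by (rule tendsto_mono[OF at_le, rotated]) simp
    then have "eventually (\<lambda>t. h (- y) t < A (- y) + \<epsilon>/2) (at_right 0)"
      using that by (intro order_tendstoD) auto
    then obtain b where b: "b > 0" "\<And>t. 0 < t \<Longrightarrow> t < b \<Longrightarrow> h (- y) t < A (- y) + \<epsilon>/2"
      unfolding eventually_at_right_field by auto
    define s where "s = b / 2"
    have s: "s > 0" "(norm u - norm (u - s *\<^sub>R y)) / s > A y - \<epsilon>/2"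
    proof -
      show "s > 0" using b by (simp add: s_def)
      have "h (- y) s < A (- y) + \<epsilon>/2" using b by (intro b(2)) (auto simp: s_def)
      then have "(norm (u - s *\<^sub>R y) - norm u) / s < - A y + \<epsilon>/2"
        by (simp add: h_def Aneg)
      then have "- ((norm (u - s *\<^sub>R y) - norm u) / s) > A y - \<epsilon>/2" by linarith
      moreover have "- ((norm (u - s *\<^sub>R y) - norm u) / s) = (norm u - norm (u - s *\<^sub>R y)) / s"
        by (metis minus_diff_eq minus_divide_left)
      ultimately show "(norm u - norm (u - s *\<^sub>R y)) / s > A y - \<epsilon>/2" by simp
    qed
    have "s * \<epsilon> / 2 > 0" using s that by simp
    from dini[OF this] obtain c where c: "c > 0"
      "\<And>r. 0 < r \<Longrightarrow> r < c \<Longrightarrow> d - s * \<epsilon> / 2 < (D (x + r *\<^sub>R u) - D x) / r"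
      unfolding eventually_at_right_field by auto
    show ?thesis unfolding eventually_at_right_field
    proof (intro exI[of _ "c * s"] conjI allI impI)
      show "c * s > 0" using c s by simp
      fix t :: real assume t: "0 < t" "t < c * s"
      define r where "r = t / s"
      have r: "0 < r" "r < c" using t s by (auto simp: r_def field_simps)
      have "d - s * \<epsilon> / 2 < (D (x + r *\<^sub>R u) - D x) / r" using c(2)[OF r] .
      then have e1: "r * (d - s * \<epsilon> / 2) < D (x + r *\<^sub>R u) - D x"
        using r by (simp add: field_simps)
      have e2: "D (x + t *\<^sub>R y) \<ge> D (x + r *\<^sub>R u) - norm (r *\<^sub>R u - t *\<^sub>R y)"
        using infdist_triangle[of "x + r *\<^sub>R u" K "x + t *\<^sub>R y"] by (simp add: D_def distfun_def dist_norm algebra_simps)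
      have "r *\<^sub>R u - t *\<^sub>R y = r *\<^sub>R (u - s *\<^sub>R y)" using s by (simp add: r_def algebra_simps)
      then have e3: "norm (r *\<^sub>R u - t *\<^sub>R y) = r * norm (u - s *\<^sub>R y)" using r by simp
      have e4: "r * (norm u - norm (u - s *\<^sub>R y)) > r * s * (A y - \<epsilon>/2)"
      proof -
        have "norm u - norm (u - s *\<^sub>R y) > s * (A y - \<epsilon>/2)"
          using s(2) s(1) by (simp add: pos_less_divide_eq mult.commute)
        from mult_strict_left_mono[OF this r(1)] show ?thesis by (simp add: mult.assoc)
      qed
      have rs: "r * s = t" using s by (simp add: r_def)
      have "D (x + t *\<^sub>R y) - D x > t * (A y - \<epsilon>)"
      proof -
        have "D (x + t *\<^sub>R y) - D x \<ge> D (x + r *\<^sub>R u) - D x - r * norm (u - s *\<^sub>R y)"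
          using e2 e3 by simp
        moreover have "D (x + r *\<^sub>R u) - D x - r * norm (u - s *\<^sub>R y)
            > r * d - t * \<epsilon> / 2 - r * norm (u - s *\<^sub>R y)"
          using e1 rs by (simp add: algebra_simps)
        moreover have "r * d - t * \<epsilon> / 2 - r * norm (u - s *\<^sub>R y) > t * (A y - \<epsilon>)"
          using e4 rs du by (simp add: algebra_simps)
        ultimately show ?thesis by linarith
      qed
      then show "A y - \<epsilon> < g y t" using t by (simp add: g_def field_simps)
    qed
  qed
  have lim: "((\<lambda>t. g y t) \<longlongrightarrow> A y) (at 0)" for y
  proof (rule filterlim_split_at)
    have hr: "((\<lambda>t. h y t) \<longlongrightarrow> A y) (at_right 0)"
      using N[of y] unfolding h_def by (rule tendsto_mono[OF at_le, rotated]) simp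
    have hl: "((\<lambda>t. h y t) \<longlongrightarrow> A y) (at_left 0)"
      using N[of y] unfolding h_def by (rule tendsto_mono[OF at_le, rotated]) simp
    show "((\<lambda>t. g y t) \<longlongrightarrow> A y) (at_right 0)"
    proof (rule order_tendstoI)
      fix a assume "a < A y"
      then show "eventually (\<lambda>t. a < g y t) (at_right 0)"
        using F2[of "A y - a" y] by simp
    next
      fix a assume "a > A y"
      with hr have "eventually (\<lambda>t. h y t < a) (at_right 0)" by (rule order_tendstoD)
      moreover have "eventually (\<lambda>t. t > 0) (at_right (0::real))" by (simp add: eventually_at_right_less)
      ultimately show "eventually (\<lambda>t. g y t < a) (at_right 0)"
        by eventually_elim (meson F1 order_le_less_trans)
    qed
    show "((\<lambda>t. g y t) \<longlongrightarrow> A y) (at_left 0)"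
    proof (rule order_tendstoI)
      fix a assume "a < A y"
      with hl have "eventually (\<lambda>t. a < h y t) (at_left 0)" by (rule order_tendstoD)
      moreover have "eventually (\<lambda>t. t < 0) (at_left (0::real))" by (simp add: eventually_at_filter)
      ultimately show "eventually (\<lambda>t. a < g y t) (at_left 0)"
        by eventually_elim (meson F1' order_less_le_trans)
    next
      fix a assume a: "a > A y"
      have "eventually (\<lambda>t. A (- y) - (a - A y) < g (- y) t) (at_right 0)"
        using F2[of "a - A y" "- y"] a by simp
      then have "eventually (\<lambda>t. A (- y) - (a - A y) < g (- y) (- t)) (at_left 0)"
        unfolding at_left_minus eventually_filtermap by simp
      then show "eventually (\<lambda>t. g y t < a) (at_left 0)"
      proof eventually_elim
        case (elim t)
        have "g (- y) (- t) = - g y t" by (simp add: g_def field_simps)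
        with elim show ?case by (simp add: Aneg)
      qed
    qed
  qed
  show ?thesis unfolding gateaux_differentiable_def
    using A lim unfolding g_def D_def by blast
qed

end
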